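(* Let $\mathcal S$ be a finite set, let $0<\lambda<1$, and let $N_1,\dots,N_t$ be row-stochastic matrices indexed by $\mathcal S\times\mathcal S$ with $\|N_k\|\le\lambda$ for all $k$. Let $\boldsymbol\delta\in\mathbb R^{\mathcal S\times\mathcal S}$ satisfy $\sum_{s}\boldsymbol\delta(s)=0$ and $\|\boldsymbol\delta\|_1=2\delta$ for a scalar $\delta>0$, and let $S^*\subseteq\mathcal S\times\mathcal S$ satisfy $\sum_{s\in S^*}\boldsymbol\delta(s)=\delta$. Suppose $\hat M_k=N_k+\mathbf 1\boldsymbol\delta^T$ is row-stochastic for each $k$. Put $\hat M=\hat M_1\hat M_2\cdots\hat M_t$, $N=N_1N_2\cdots N_t$ and $E=\hat M-N$. Then all rows of $E$ are equal, and in each row the entries in the columns indexed by $S^*$ sum to at least $\lambda'\delta$, where $\lambda'=1-\frac{\lambda}{1-\lambda}$.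
   Context: For a real square matrix $M$, $\|M\|=\max_{x\neq 0,\ x\perp\mathbf 1}\|x^TM\|_1/\|x\|_1$, where $\mathbf 1$ is the all-ones vector. In the application, $N_k=M_{e_k,i}\otimes M_{e_k,j}$ is the tensor (Kronecker) product of the transition matrices of two characters $i,j$ on the $k$-th edge of a root-to-leaf path, i.e. $(M_{e,i}\otimes M_{e,j})_{(a,b),(a',b')}=M_{e,i}(a,a')M_{e,j}(b,b')$, and $\hat M_k$ is the joint transition matrix of the dependent pair. *)

theory Defs
  imports "HOL-Analysis.Analysis"
begin

definition l1 :: "real ^ 'n::finite \<Rightarrow> real" where
  "l1 x = (\<Sum>i\<in>UNIV. \<bar>x $ i\<bar>)"

definition row_stochastic :: "real ^ 'n::finite ^ 'n \<Rightarrow> bool" where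
  "row_stochastic M \<longleftrightarrow> (\<forall>i j. 0 \<le> M $ i $ j) \<and> (\<forall>i. (\<Sum>j\<in>UNIV. M $ i $ j) = 1)"

definition contr_norm :: "real ^ 'n::finite ^ 'n \<Rightarrow> real" where
  "contr_norm M = Sup {l1 (x v* M) / l1 x | x. x \<noteq> 0 \<and> (\<Sum>i\<in>UNIV. x $ i) = 0}"

fun mat_prod :: "(nat \<Rightarrow> real ^ 'n::finite ^ 'n) \<Rightarrow> nat \<Rightarrow> real ^ 'n ^ 'n" where
  "mat_prod M 0 = mat 1"
| "mat_prod M (Suc n) = mat_prod M n ** M (Suc n)"

end

theory Submission
  imports Defs
begin

fun evec :: "(nat \<Rightarrow> real ^ 'n::finite ^ 'n) \<Rightarrow> real ^ 'n \<Rightarrow> nat \<Rightarrow> real ^ 'n" where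
  "evec N dv 0 = 0"
| "evec N dv (Suc n) = evec N dv n v* N (Suc n) + dv"

lemma l1_add: "l1 (x + y) \<le> l1 x + l1 (y :: real ^ 'n::finite)"
  unfolding l1_def by (simp add: sum.distrib[symmetric] sum_mono abs_triangle_ineq)

lemma l1_nonneg: "0 \<le> l1 (x :: real ^ 'n::finite)"
  unfolding l1_def by (simp add: sum_nonneg)

lemma sum_vm_zero:
  fixes M :: "real ^ 'n::finite ^ 'n"
  assumes "row_stochastic M" "(\<Sum>i\<in>UNIV. x $ i) = 0"
  shows "(\<Sum>j\<in>UNIV. (x v* M) $ j) = 0"
proof -
  have "(\<Sum>j\<in>UNIV. (x v* M) $ j) = (\<Sum>j\<in>UNIV. \<Sum>i\<in>UNIV. x $ i * M $ i $ j)"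
    by (rule sum.cong) (simp_all add: vector_matrix_mult_def mult.commute)
  also have "\<dots> = (\<Sum>i\<in>UNIV. \<Sum>j\<in>UNIV. x $ i * M $ i $ j)" by (rule sum.swap)
  also have "\<dots> = (\<Sum>i\<in>UNIV. x $ i * (\<Sum>j\<in>UNIV. M $ i $ j))" by (simp add: sum_distrib_left)
  also have "\<dots> = (\<Sum>i\<in>UNIV. x $ i)" using assms(1) unfolding row_stochastic_def by simp
  finally show ?thesis using assms(2) by simp
qed

lemma l1_vm_le:
  fixes M :: "real ^ 'n::finite ^ 'n"
  assumes "row_stochastic M"
  shows "l1 (x v* M) \<le> l1 x"
proof -
  have "l1 (x v* M) = (\<Sum>j\<in>UNIV. \<bar>\<Sum>i\<in>UNIV. M $ i $ j * x $ i\<bar>)"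
    unfolding l1_def vector_matrix_mult_def by (simp add: mult.commute)
  also have "\<dots> \<le> (\<Sum>j\<in>UNIV. \<Sum>i\<in>UNIV. M $ i $ j * \<bar>x $ i\<bar>)"
    apply (rule sum_mono)
    apply (rule order_trans[OF sum_abs])
    using assms unfolding row_stochastic_def by (simp add: abs_mult)
  also have "\<dots> = (\<Sum>i\<in>UNIV. \<Sum>j\<in>UNIV. M $ i $ j * \<bar>x $ i\<bar>)" by (rule sum.swap)
  also have "\<dots> = (\<Sum>i\<in>UNIV. \<bar>x $ i\<bar> * (\<Sum>j\<in>UNIV. M $ i $ j))"
    by (simp add: sum_distrib_left mult.commute)
  also have "\<dots> = l1 x" using assms unfolding row_stochastic_def l1_def by simp
  finally show ?thesis .
qed

lemma l1_contr:
  fixes M :: "real ^ 'n::finite ^ 'n"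
  assumes "row_stochastic M" "contr_norm M \<le> lam" "(\<Sum>i\<in>UNIV. x $ i) = 0"
  shows "l1 (x v* M) \<le> lam * l1 x"
proof (cases "x = 0")
  case True
  then show ?thesis by (simp add: l1_def)
next
  case False
  have pos: "l1 x > 0"
  proof -
    obtain i where "x $ i \<noteq> 0" using False by (metis vec_eq_iff zero_index)
    then have "\<bar>x $ i\<bar> \<le> l1 x" unfolding l1_def
      by (intro member_le_sum) auto
    with \<open>x $ i \<noteq> 0\<close> show ?thesis by simp
  qed
  let ?S = "{l1 (x v* M) / l1 x | x. x \<noteq> 0 \<and> (\<Sum>i\<in>UNIV. x $ i) = 0}"
  have bdd: "bdd_above ?S"
  proof (rule bdd_aboveI[of _ 1])
    fix y assume "y \<in> ?S"
    then obtain z where z: "y = l1 (z v* M) / l1 z" by blast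
    show "y \<le> 1" unfolding z
      using l1_vm_le[OF assms(1), of z] l1_nonneg[of z]
      by (cases "l1 z = 0") (auto simp: divide_le_eq)
  qed
  have "l1 (x v* M) / l1 x \<in> ?S" using False assms(3) by blast
  then have "l1 (x v* M) / l1 x \<le> contr_norm M"
    unfolding contr_norm_def by (rule cSup_upper[OF _ bdd])
  then have "l1 (x v* M) / l1 x \<le> lam" using assms(2) by linarith
  then show ?thesis using pos by (simp add: divide_le_eq mult.commute)
qed

lemma subset_sum_ge:
  fixes y :: "real ^ 'n::finite"
  assumes "(\<Sum>i\<in>UNIV. y $ i) = 0"
  shows "(\<Sum>i\<in>S. y $ i) \<ge> - l1 y / 2"
proof -
  have split: "(\<Sum>i\<in>UNIV. y $ i) = (\<Sum>i\<in>S. y $ i) + (\<Sum>i\<in>UNIV - S. y $ i)"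
    using sum.Int_Diff[of UNIV "\<lambda>i. y $ i" S] by simp
  have splita: "l1 y = (\<Sum>i\<in>S. \<bar>y $ i\<bar>) + (\<Sum>i\<in>UNIV - S. \<bar>y $ i\<bar>)" unfolding l1_def
    using sum.Int_Diff[of UNIV "\<lambda>i. \<bar>y $ i\<bar>" S] by simp
  have a: "(\<Sum>i\<in>S. y $ i) \<ge> - (\<Sum>i\<in>S. \<bar>y $ i\<bar>)"
    using sum_mono[of S "\<lambda>i. - \<bar>y $ i\<bar>" "\<lambda>i. y $ i"] by (simp add: sum_negf)
  have b: "(\<Sum>i\<in>UNIV - S. y $ i) \<le> (\<Sum>i\<in>UNIV - S. \<bar>y $ i\<bar>)"
    by (rule sum_mono) simp
  show ?thesis using a b split splita assms by linarith
qed

lemma aux: "- l / 2 + d \<le> (s::real) \<Longrightarrow> l \<le> K \<Longrightarrow> - K / 2 + d \<le> s"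
  by linarith

theorem mainTheorem10:
  fixes N Mhat :: "nat \<Rightarrow> real ^ ('a::finite \<times> 'a) ^ ('a \<times> 'a)"
    and dv :: "real ^ ('a \<times> 'a)"
    and lam \<delta> :: real and t :: nat and Sstar :: "('a \<times> 'a) set"
  assumes t: "t \<ge> 1"
    and lam: "0 < lam" "lam < 1"
    and Nstoch: "\<And>k. 1 \<le> k \<Longrightarrow> k \<le> t \<Longrightarrow> row_stochastic (N k)"
    and Nnorm: "\<And>k. 1 \<le> k \<Longrightarrow> k \<le> t \<Longrightarrow> contr_norm (N k) \<le> lam"
    and dsum: "(\<Sum>s\<in>UNIV. dv $ s) = 0"
    and dpos: "\<delta> > 0"
    and dl1: "l1 dv = 2 * \<delta>"
    and dS: "(\<Sum>s\<in>Sstar. dv $ s) = \<delta>"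
    and Mhat_def: "\<And>k. 1 \<le> k \<Longrightarrow> k \<le> t \<Longrightarrow> Mhat k = (\<chi> i j. N k $ i $ j + dv $ j)"
    and Mhat_stoch: "\<And>k. 1 \<le> k \<Longrightarrow> k \<le> t \<Longrightarrow> row_stochastic (Mhat k)"
  shows "(\<forall>i i' j. (mat_prod Mhat t - mat_prod N t) $ i $ j = (mat_prod Mhat t - mat_prod N t) $ i' $ j)
       \<and> (\<forall>i. (\<Sum>j\<in>Sstar. (mat_prod Mhat t - mat_prod N t) $ i $ j) \<ge> (1 - lam / (1 - lam)) * \<delta>)"
proof -
  let ?e = "evec N dv"
  have main: "n \<le> t \<Longrightarrow> (\<forall>i j. (mat_prod Mhat n - mat_prod N n) $ i $ j = ?e n $ j)
      \<and> (\<forall>i. (\<Sum>j\<in>UNIV. mat_prod Mhat n $ i $ j) = 1)" for n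
  proof (induction n)
    case 0
    then show ?case by (simp add: mat_def)
  next
    case (Suc n)
    then have IH: "\<And>i j. (mat_prod Mhat n - mat_prod N n) $ i $ j = ?e n $ j"
      and rs: "\<And>i. (\<Sum>j\<in>UNIV. mat_prod Mhat n $ i $ j) = 1" by auto
    have IH': "\<And>i k. mat_prod Mhat n $ i $ k - mat_prod N n $ i $ k = ?e n $ k"
      using IH by simp
    have Mh: "Mhat (Suc n) = (\<chi> i j. N (Suc n) $ i $ j + dv $ j)" using Suc.prems Mhat_def by simp
    have st: "row_stochastic (Mhat (Suc n))" using Suc.prems Mhat_stoch by simp
    let ?A = "mat_prod Mhat n" and ?B = "mat_prod N n" and ?N = "N (Suc n)"
    have 1: "(mat_prod Mhat (Suc n) - mat_prod N (Suc n)) $ i $ j = ?e (Suc n) $ j" for i j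
    proof -
      have "(mat_prod Mhat (Suc n) - mat_prod N (Suc n)) $ i $ j
          = (\<Sum>k\<in>UNIV. ?A $ i $ k * (?N $ k $ j + dv $ j)) - (\<Sum>k\<in>UNIV. ?B $ i $ k * ?N $ k $ j)"
        by (simp add: Mh matrix_matrix_mult_def)
      also have "\<dots> = (\<Sum>k\<in>UNIV. (?A - ?B) $ i $ k * ?N $ k $ j) + (\<Sum>k\<in>UNIV. ?A $ i $ k) * dv $ j"
        by (simp add: algebra_simps sum.distrib sum_subtractf sum_distrib_right sum_distrib_left)
      also have "\<dots> = (\<Sum>k\<in>UNIV. ?N $ k $ j * ?e n $ k) + dv $ j"
        using IH' by (simp add: rs mult.commute)
      also have "\<dots> = ?e (Suc n) $ j" by (simp add: vector_matrix_mult_def mult.commute)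
      finally show ?thesis .
    qed
    have 2: "(\<Sum>j\<in>UNIV. mat_prod Mhat (Suc n) $ i $ j) = 1" for i
    proof -
      have r: "\<And>k. (\<Sum>j\<in>UNIV. Mhat (Suc n) $ k $ j) = 1"
        using st unfolding row_stochastic_def by blast
      have "(\<Sum>j\<in>UNIV. mat_prod Mhat (Suc n) $ i $ j)
          = (\<Sum>j\<in>UNIV. \<Sum>k\<in>UNIV. ?A $ i $ k * Mhat (Suc n) $ k $ j)"
        by (simp add: matrix_matrix_mult_def)
      also have "\<dots> = (\<Sum>k\<in>UNIV. \<Sum>j\<in>UNIV. ?A $ i $ k * Mhat (Suc n) $ k $ j)"
        by (rule sum.swap)
      also have "\<dots> = (\<Sum>k\<in>UNIV. ?A $ i $ k * (\<Sum>j\<in>UNIV. Mhat (Suc n) $ k $ j))"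
        by (simp add: sum_distrib_left)
      also have "\<dots> = 1" by (simp add: r rs)
      finally show ?thesis .
    qed
    show ?case using 1 2 by blast
  qed
  have inv: "n \<le> t \<Longrightarrow> (\<Sum>i\<in>UNIV. ?e n $ i) = 0 \<and> l1 (?e n) \<le> 2 * \<delta> / (1 - lam)
      \<and> (n \<ge> 1 \<longrightarrow> (\<Sum>j\<in>Sstar. ?e n $ j) \<ge> (1 - lam / (1 - lam)) * \<delta>)" for n
  proof (induction n)
    case 0
    then show ?case using lam dpos by (simp add: l1_def)
  next
    case (Suc n)
    then have s0: "(\<Sum>i\<in>UNIV. ?e n $ i) = 0" and l1b: "l1 (?e n) \<le> 2 * \<delta> / (1 - lam)" by auto
    have st: "row_stochastic (N (Suc n))" and nn: "contr_norm (N (Suc n)) \<le> lam"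
      using Suc.prems Nstoch Nnorm by auto
    let ?y = "?e n v* N (Suc n)"
    have ys: "(\<Sum>i\<in>UNIV. ?y $ i) = 0" by (rule sum_vm_zero[OF st s0])
    have yl: "l1 ?y \<le> lam * l1 (?e n)" by (rule l1_contr[OF st nn s0])
    have yl2: "l1 ?y \<le> lam * (2 * \<delta> / (1 - lam))"
      using yl mult_left_mono[OF l1b, of lam] lam by linarith
    have A: "(\<Sum>i\<in>UNIV. ?e (Suc n) $ i) = 0" using ys dsum by (simp add: sum.distrib)
    have "l1 (?e (Suc n)) \<le> l1 ?y + 2 * \<delta>" using l1_add[of ?y dv] dl1 by simp
    also have "\<dots> \<le> lam * (2 * \<delta> / (1 - lam)) + 2 * \<delta>" using yl2 by linarith
    also have "\<dots> = 2 * \<delta> / (1 - lam)" using lam by (simp add: field_simps)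
    finally have B: "l1 (?e (Suc n)) \<le> 2 * \<delta> / (1 - lam)" .
    have "(\<Sum>j\<in>Sstar. ?e (Suc n) $ j) = (\<Sum>j\<in>Sstar. ?y $ j) + \<delta>" using dS by (simp add: sum.distrib)
    also have "\<dots> \<ge> - l1 ?y / 2 + \<delta>" using subset_sum_ge[OF ys, of Sstar] by linarith
    finally have "(\<Sum>j\<in>Sstar. ?e (Suc n) $ j) \<ge> - (lam * (2 * \<delta> / (1 - lam))) / 2 + \<delta>"
      by (rule aux[OF _ yl2])
    moreover have "- (lam * (2 * \<delta> / (1 - lam))) / 2 + \<delta> = (1 - lam / (1 - lam)) * \<delta>"
      using lam by (simp add: field_simps)
    ultimately show ?case using A B by simp
  qed
  have E: "\<And>i j. (mat_prod Mhat t - mat_prod N t) $ i $ j = ?e t $ j" using main[OF order_refl] by blast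
  have lb: "(1 - lam / (1 - lam)) * \<delta> \<le> (\<Sum>j\<in>Sstar. ?e t $ j)" using inv[OF order_refl] t by simp
  show ?thesis unfolding E using lb by simp
qed

end
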